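(* Let $\mathscr{G}_n$ be a simple, verbose $\upsilon$-reduction grammar. Then for each production $G_n \to \chi[\sigma_1]\cdots[\sigma_w]$ of $\mathscr{G}_n$ whose right-hand side has closure width $w$ (with head $\chi$), either $\chi = N$ or $\chi = f(\alpha_1,\dots,\alpha_m)$ for some function symbol $f$ of arity $m$ other than the closure symbol $\cdot[\cdot]$.
   Context: $\lambda\upsilon$-terms: $t ::= \underline{n} \mid \lambda t \mid t\,t \mid t[s]$; substitutions $s ::= t/ \mid \Uparrow(s) \mid\ \uparrow$; indices $\underline{n} ::= \underline{0} \mid \mathtt{S}\,\underline{n}$. The $\upsilon$-rules: $(a b)[s] \to a[s](b[s])$; $(\lambda a)[s] \to \lambda(a[\Uparrow(s)])$; $\underline{0}[a/] \to a$; $(\mathtt{S}\,\underline{n})[a/] \to \underline{n}$; $\underline{0}[\Uparrow(s)] \to \underline{0}$; $(\mathtt{S}\,\underline{n})[\Uparrow(s)] \to \underline{n}[s][\uparrow]$; $\underline{n}[\uparrow] \to \mathtt{S}\,\underline{n}$. A term normalises in $k$ steps if leftmost-outermost $\upsilon$-reduction reaches a $\upsilon$-normal form in exactly $k$ steps. $\mathscr{F}$ is the ranked alphabet of $\lambda\upsilon$ symbols (application, closure $\cdot[\cdot]$ binary; $\lambda$, $\cdot/$, $\Uparrow$, $\mathtt{S}$ unary; $\uparrow,\underline{0}$ constants); $\mathscr{T}_{\mathscr{F}}(X)$ is the set of terms over $\mathscr{F}$ with variables from $X$. In a regular tree grammar with productions $X\to\alpha$, $L(\alpha)$ is the set of ground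 terms derivable from $\alpha$; a non-terminal is unambiguous if each ground term has at most one derivation from it; a production $X\to\alpha$ is self-referencing if $X$ occurs in $\alpha$, regular otherwise. $\Lambda$ has productions $T \to N \mid \lambda T \mid T T \mid T[S]$, $S \to T/ \mid \Uparrow(S) \mid \uparrow$, $N \to \underline{0} \mid \mathtt{S} N$. A $\upsilon$-reduction grammar $\mathscr{G}_n$ has axiom $G_n$, non-terminals $\{T,S,N,G_0,\dots,G_n\}$, contains all productions of $\Lambda$, and each $G_k$ ($0\le k\le n$) is unambiguous with $L(G_k)$ the set of terms normalising in exactly $k$ steps. It is simple if its self-referencing productions are productions of $\Lambda$ or of the form $G_k \to \lambda G_k \mid G_0 G_k \mid G_k G_0$, and each regular production $G_k\to\alpha$ has $\alpha \in \mathscr{T}_{\mathscr{F}}(\{T,S,N,G_0,\dots,G_{k-1}\})$. It is verbose if none of its productions has the form $X \to G_k[\sigma_1]\cdots[\sigma_w]$ for some $k$ and $w\ge 0$. A term $\alpha$ has closure width $w$ if $w$ is the largest non-negative integer such that $\alpha = \chi[\sigma_1]\cdots[\sigma_w]$ for some term $\chi$ (the head) and terms $\sigma_1,\dots,\sigma_w$. *)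

theory Defs
  imports Main
begin

text \<open>Symbols: application (binary), closure (binary), lambda, slash (a/),
  lift (Uparrow), successor S (unary), shift (uparrow) and index 0 (constants).\<close>
datatype 'v rt =
    V 'v
  | Ap "'v rt" "'v rt"
  | Cl "'v rt" "'v rt"
  | Lm "'v rt"
  | Sl "'v rt"
  | Up "'v rt"
  | Sc "'v rt"
  | Sh
  | Z

datatype nt = NT | NS | NN | NG nat

fun is_idx :: "'v rt \<Rightarrow> bool" where
  "is_idx Z = True"
| "is_idx (Sc n) = is_idx n"
| "is_idx _ = False"

fun is_term :: "'v rt \<Rightarrow> bool" and is_subst :: "'v rt \<Rightarrow> bool" where
  "is_term (Lm a) = is_term a"
| "is_term (Ap a b) = (is_term a \<and> is_term b)"
| "is_term (Cl a s) = (is_term a \<and> is_subst s)"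
| "is_term Z = True"
| "is_term (Sc n) = is_idx n"
| "is_term _ = False"
| "is_subst (Sl a) = is_term a"
| "is_subst (Up s) = is_subst s"
| "is_subst Sh = True"
| "is_subst _ = False"

fun root_step :: "'v rt \<Rightarrow> 'v rt option" where
  "root_step (Cl (Ap a b) s) = Some (Ap (Cl a s) (Cl b s))"
| "root_step (Cl (Lm a) s) = Some (Lm (Cl a (Up s)))"
| "root_step (Cl Z (Sl a)) = Some a"
| "root_step (Cl (Sc n) (Sl a)) = (if is_idx n then Some n else None)"
| "root_step (Cl Z (Up s)) = Some Z"
| "root_step (Cl (Sc n) (Up s)) = (if is_idx n then Some (Cl (Cl n s) Sh) else None)"
| "root_step (Cl Z Sh) = Some (Sc Z)"
| "root_step (Cl (Sc n) Sh) = (if is_idx n then Some (Sc (Sc n)) else None)"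
| "root_step _ = None"

fun lo_step :: "'v rt \<Rightarrow> 'v rt option" where
  "lo_step (Ap a b) = (case lo_step a of Some a' \<Rightarrow> Some (Ap a' b)
                        | None \<Rightarrow> map_option (Ap a) (lo_step b))"
| "lo_step (Cl a s) = (case root_step (Cl a s) of Some u \<Rightarrow> Some u
                        | None \<Rightarrow> (case lo_step a of Some a' \<Rightarrow> Some (Cl a' s)
                                   | None \<Rightarrow> map_option (Cl a) (lo_step s)))"
| "lo_step (Lm a) = map_option Lm (lo_step a)"
| "lo_step (Sl a) = map_option Sl (lo_step a)"
| "lo_step (Up a) = map_option Up (lo_step a)"
| "lo_step (Sc a) = map_option Sc (lo_step a)"
| "lo_step (V x) = None"
| "lo_step Sh = None"
| "lo_step Z = None"

definition normalises_in :: "'v rt \<Rightarrow> nat \<Rightarrow> bool" where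
  "normalises_in t k \<longleftrightarrow> is_term t \<and>
     (\<exists>f. f 0 = t \<and> (\<forall>i<k. lo_step (f i) = Some (f (Suc i))) \<and> lo_step (f k) = None)"

type_synonym prod = "nt \<times> nt rt"

primrec rjoin :: "'a rt rt \<Rightarrow> 'a rt" where
  "rjoin (V t) = t"
| "rjoin (Ap a b) = Ap (rjoin a) (rjoin b)"
| "rjoin (Cl a b) = Cl (rjoin a) (rjoin b)"
| "rjoin (Lm a) = Lm (rjoin a)"
| "rjoin (Sl a) = Sl (rjoin a)"
| "rjoin (Up a) = Up (rjoin a)"
| "rjoin (Sc a) = Sc (rjoin a)"
| "rjoin Sh = Sh"
| "rjoin Z = Z"

text \<open>A derivation from non-terminal X: the right-hand side of the production
  used, with every non-terminal occurrence replaced by a sub-derivation.\<close>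
datatype dv = DV nt "dv rt"

primrec dnt :: "dv \<Rightarrow> nt" where
  "dnt (DV X \<beta>) = X"

primrec yield :: "dv \<Rightarrow> nt rt" where
  "yield (DV X \<beta>) = rjoin (map_rt yield \<beta>)"

inductive valid :: "prod set \<Rightarrow> dv \<Rightarrow> bool" for P where
  "(X, map_rt dnt \<beta>) \<in> P \<Longrightarrow> (\<And>d. d \<in> set_rt \<beta> \<Longrightarrow> valid P d) \<Longrightarrow> valid P (DV X \<beta>)"

definition Lang :: "prod set \<Rightarrow> nt \<Rightarrow> nt rt set" where
  "Lang P X = {yield d | d. valid P d \<and> dnt d = X}"

definition unambiguous :: "prod set \<Rightarrow> nt \<Rightarrow> bool" where
  "unambiguous P X \<longleftrightarrow> (\<forall>d1 d2. valid P d1 \<and> valid P d2 \<and> dnt d1 = X \<and> dnt d2 = X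
      \<and> yield d1 = yield d2 \<longrightarrow> d1 = d2)"

definition Lambda_prods :: "prod set" where
  "Lambda_prods = {(NT, V NN), (NT, Lm (V NT)), (NT, Ap (V NT) (V NT)), (NT, Cl (V NT) (V NS)),
                   (NS, Sl (V NT)), (NS, Up (V NS)), (NS, Sh),
                   (NN, Z), (NN, Sc (V NN))}"

definition NTs :: "nat \<Rightarrow> nt set" where
  "NTs n = {NT, NS, NN} \<union> NG ` {..n}"

definition ureduction_grammar :: "nat \<Rightarrow> prod set \<Rightarrow> bool" where
  "ureduction_grammar n P \<longleftrightarrow> finite P \<and> Lambda_prods \<subseteq> P \<and>
     (\<forall>(X, \<alpha>) \<in> P. X \<in> NTs n \<and> set_rt \<alpha> \<subseteq> NTs n) \<and>
     (\<forall>k\<le>n. unambiguous P (NG k) \<and> Lang P (NG k) = {t. normalises_in t k})"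

definition simple_grammar :: "nat \<Rightarrow> prod set \<Rightarrow> bool" where
  "simple_grammar n P \<longleftrightarrow>
     (\<forall>(X, \<alpha>) \<in> P. X \<in> set_rt \<alpha> \<longrightarrow>
        (X, \<alpha>) \<in> Lambda_prods \<or>
        (\<exists>k. (X, \<alpha>) = (NG k, Lm (V (NG k))) \<or> (X, \<alpha>) = (NG k, Ap (V (NG 0)) (V (NG k)))
             \<or> (X, \<alpha>) = (NG k, Ap (V (NG k)) (V (NG 0))))) \<and>
     (\<forall>k \<alpha>. (NG k, \<alpha>) \<in> P \<and> NG k \<notin> set_rt \<alpha> \<longrightarrow> set_rt \<alpha> \<subseteq> {NT, NS, NN} \<union> NG ` {..<k})"

text \<open>Head of a term: strip all outermost closures (closure width maximal).\<close>
fun chead :: "'v rt \<Rightarrow> 'v rt" where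
  "chead (Cl a s) = chead a"
| "chead t = t"

definition verbose_grammar :: "prod set \<Rightarrow> bool" where
  "verbose_grammar P \<longleftrightarrow> (\<forall>(X, \<alpha>) \<in> P. \<forall>k. chead \<alpha> \<noteq> V (NG k))"

fun nonclosure_app :: "'v rt \<Rightarrow> bool" where
  "nonclosure_app (V _) = False"
| "nonclosure_app (Cl _ _) = False"
| "nonclosure_app _ = True"

end

theory Submission
  imports Defs
begin

definition nsteps :: "'v rt \<Rightarrow> nat \<Rightarrow> bool" where
  "nsteps t k \<longleftrightarrow> (\<exists>f. f 0 = t \<and> (\<forall>i<k. lo_step (f i) = Some (f (Suc i))) \<and> lo_step (f k) = None)"

lemma nsteps_0: "nsteps t 0 \<longleftrightarrow> lo_step t = None"
  unfolding nsteps_def by auto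

lemma nsteps_Suc:
  assumes "lo_step t = Some t'"
  shows "nsteps t (Suc k) \<longleftrightarrow> nsteps t' k"
proof
  assume "nsteps t (Suc k)"
  then obtain f where f: "f 0 = t" "\<forall>i<Suc k. lo_step (f i) = Some (f (Suc i))" "lo_step (f (Suc k)) = None"
    unfolding nsteps_def by blast
  have "f 1 = t'" using f(1) f(2)[rule_format, of 0] assms by simp
  then show "nsteps t' k" unfolding nsteps_def
    using f by (intro exI[of _ "\<lambda>i. f (Suc i)"]) auto
next
  assume "nsteps t' k"
  then obtain f where f: "f 0 = t'" "\<forall>i<k. lo_step (f i) = Some (f (Suc i))" "lo_step (f k) = None"
    unfolding nsteps_def by blast
  show "nsteps t (Suc k)" unfolding nsteps_def
  proof (intro exI[of _ "\<lambda>i. if i = 0 then t else f (i - 1)"] conjI allI impI)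
    fix i assume "i < Suc k"
    then show "lo_step (if i = 0 then t else f (i - 1)) = Some (if Suc i = 0 then t else f (Suc i - 1))"
      using f assms by (cases i) auto
  qed (use f in auto)
qed

lemma nsteps_det: "nsteps t k \<Longrightarrow> nsteps t k' \<Longrightarrow> k = k'"
proof (induction k arbitrary: t k')
  case 0
  then show ?case by (cases k') (auto simp: nsteps_0 nsteps_def)
next
  case (Suc k)
  then obtain t' where t': "lo_step t = Some t'"
    unfolding nsteps_def by auto
  show ?case
  proof (cases k')
    case 0 then show ?thesis using Suc.prems t' by (simp add: nsteps_0)
  next
    case (Suc m) then show ?thesis using Suc.prems Suc.IH t' nsteps_Suc by metis
  qed
qed

lemma normalises_nsteps: "normalises_in t k \<longleftrightarrow> is_term t \<and> nsteps t k"
  unfolding normalises_in_def nsteps_def by simp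

lemma chead_not_Cl: "chead t \<noteq> Cl a b"
  by (induction t rule: chead.induct) auto

lemma chead_V: "chead \<alpha> = V X \<Longrightarrow> \<exists>ss. \<alpha> = foldl Cl (V X) ss"
proof (induction \<alpha>)
  case (Cl a s)
  then obtain ss where "a = foldl Cl (V X) ss" by auto
  then show ?case by (intro exI[of _ "ss @ [s]"]) simp
next
  case (V x) then show ?case by (intro exI[of _ "[]"]) simp
qed auto

lemma is_idx_Sc: "is_idx ((Sc ^^ j) Z)"
  by (induction j) auto

lemma step_head: "lo_step (foldl Cl (Cl ((Sc ^^ j) Z) Sh) ss) = Some (foldl Cl ((Sc ^^ Suc j) Z) ss)"
proof (induction ss rule: rev_induct)
  case Nil
  then show ?case using is_idx_Sc[of j] by (cases j) auto
next
  case (snoc s ss)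
  have "root_step (Cl (foldl Cl (Cl ((Sc ^^ j) Z) Sh) ss) s) = None"
    by (cases ss rule: rev_cases) auto
  then show ?case using snoc by simp
qed

lemma lo_Sc: "lo_step ((Sc ^^ j) Z) = None"
  by (induction j) auto

lemma is_term_Sc: "is_term ((Sc ^^ j) Z)"
proof -
  have "is_idx ((Sc ^^ j) Z)" by (induction j) auto
  then show ?thesis by (cases j) auto
qed

lemma witness: "nsteps (foldl Cl ((Sc ^^ j) Z) (replicate k Sh)) k"
proof (induction k arbitrary: j)
  case 0 then show ?case by (simp add: nsteps_0 lo_Sc)
next
  case (Suc k)
  have "lo_step (foldl Cl ((Sc ^^ j) Z) (replicate (Suc k) Sh)) = Some (foldl Cl ((Sc ^^ Suc j) Z) (replicate k Sh))"
    using step_head[of j "replicate k Sh"] by simp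
  then show ?case using Suc nsteps_Suc by blast
qed

lemma is_term_foldl: "is_term (foldl Cl h ss) \<Longrightarrow> is_term h"
proof (induction ss arbitrary: h)
  case (Cons a ss)
  have "is_term (Cl h a)" using Cons.IH[OF Cons.prems[simplified]] .
  then show ?case by simp
qed simp

lemma is_term_rep: "is_term (foldl Cl h (replicate k Sh)) \<longleftrightarrow> is_term h"
  by (induction k arbitrary: h) auto

lemma normalises_exists: "normalises_in (foldl Cl Z (replicate k Sh)) k"
  using witness[of 0 k] is_term_rep[of Z k] by (simp add: normalises_nsteps)

lemma map_rt_foldl: "map_rt f (foldl Cl h ss) = foldl Cl (map_rt f h) (map (map_rt f) ss)"
  by (induction ss arbitrary: h) auto

lemma rjoin_foldl: "rjoin (foldl Cl h ss) = foldl Cl (rjoin h) (map rjoin ss)"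
  by (induction ss arbitrary: h) auto

lemma set_rt_foldl: "set_rt (foldl Cl h ss) = set_rt h \<union> (\<Union>s\<in>set ss. set_rt s)"
  by (induction ss arbitrary: h) auto

lemma is_term_Sh: "\<not> is_term (foldl Cl Sh ss)"
  using is_term_foldl by fastforce

definition "dZ = DV NN Z"
definition "dNT0 = DV NT (V dZ)"
definition "dSh = DV NS Sh"
definition "dClZSh = DV NT (Cl (V dNT0) (V dSh))"
definition "dScZ = DV NT (V (DV NN (Sc (V dZ))))"

lemma derivs:
  assumes "Lambda_prods \<subseteq> P"
  shows "valid P dZ" "valid P dNT0" "valid P dSh" "valid P dClZSh" "valid P dScZ"
proof -
  have L: "(NT, V NN) \<in> P" "(NT, Cl (V NT) (V NS)) \<in> P" "(NS, Sh) \<in> P" "(NN, Z) \<in> P"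
     "(NN, Sc (V NN)) \<in> P"
    using assms unfolding Lambda_prods_def by auto
  show 1: "valid P dZ" unfolding dZ_def by (rule valid.intros) (use L in auto)
  show 2: "valid P dNT0" unfolding dNT0_def by (rule valid.intros) (use L 1 in \<open>auto simp: dZ_def\<close>)
  show 3: "valid P dSh" unfolding dSh_def by (rule valid.intros) (use L in auto)
  show "valid P dClZSh" unfolding dClZSh_def
    by (rule valid.intros) (use L 2 3 in \<open>auto simp: dNT0_def dSh_def\<close>)
  have 4: "valid P (DV NN (Sc (V dZ)))" by (rule valid.intros) (use L 1 in \<open>auto simp: dZ_def\<close>)
  show "valid P dScZ" unfolding dScZ_def by (rule valid.intros) (use L 4 in auto)
qed

lemma yields: "yield dClZSh = Cl Z Sh" "yield dScZ = Sc Z" "yield dSh = Sh"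
  "dnt dClZSh = NT" "dnt dScZ = NT" "dnt dSh = NS"
  by (simp_all add: dClZSh_def dScZ_def dSh_def dNT0_def dZ_def)

lemma exists_deriv:
  assumes "ureduction_grammar n P" "Y \<in> NTs n"
  shows "\<exists>d. valid P d \<and> dnt d = Y"
proof -
  have LP: "Lambda_prods \<subseteq> P" using assms(1) unfolding ureduction_grammar_def by auto
  note D = derivs[OF LP]
  show ?thesis
  proof (cases Y)
    case NT then show ?thesis using D(2) by (auto simp: dNT0_def)
  next
    case NS then show ?thesis using D(3) by (auto simp: dSh_def)
  next
    case NN then show ?thesis using D(1) by (auto simp: dZ_def)
  next
    case (NG k)
    then have "k \<le> n" using assms(2) unfolding NTs_def by auto
    then have "Lang P (NG k) = {t. normalises_in t k}" using assms(1) unfolding ureduction_grammar_def by auto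
    then have "foldl Cl Z (replicate k Sh) \<in> Lang P (NG k)" using normalises_exists by auto
    then show ?thesis using NG unfolding Lang_def by auto
  qed
qed

lemma build:
  assumes G: "ureduction_grammar n P" and A: "(X, foldl Cl (V H) ss) \<in> P"
    and dh: "valid P dh" "dnt dh = H"
  shows "yield (DV X (foldl Cl (V dh) (map (map_rt (\<lambda>Y. SOME d. valid P d \<and> dnt d = Y)) ss)))
             = foldl Cl (yield dh) (map (rjoin \<circ> (map_rt yield \<circ> map_rt (\<lambda>Y. SOME d. valid P d \<and> dnt d = Y))) ss)
         \<and> valid P (DV X (foldl Cl (V dh) (map (map_rt (\<lambda>Y. SOME d. valid P d \<and> dnt d = Y)) ss)))"
proof -
  define g where "g = (\<lambda>Y. SOME d. valid P d \<and> dnt d = Y)"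
  have sub: "set_rt (foldl Cl (V H) ss) \<subseteq> NTs n" using G A unfolding ureduction_grammar_def by fastforce
  have gY: "valid P (g Y) \<and> dnt (g Y) = Y" if "Y \<in> NTs n" for Y
    unfolding g_def using someI_ex[OF exists_deriv[OF G that]] .
  have Ys: "\<And>s Y. s \<in> set ss \<Longrightarrow> Y \<in> set_rt s \<Longrightarrow> Y \<in> NTs n"
    using sub by (auto simp: set_rt_foldl)
  have eqs: "map (map_rt dnt) (map (map_rt g) ss) = ss"
  proof -
    have "map_rt dnt (map_rt g s) = s" if "s \<in> set ss" for s
      using gY Ys[OF that] by (simp add: rt.map_comp) (rule rt.map_ident_strong, simp)
    then show ?thesis by (simp add: map_idI)
  qed
  have v: "valid P (DV X (foldl Cl (V dh) (map (map_rt g) ss)))"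
  proof (rule valid.intros)
    show "(X, map_rt dnt (foldl Cl (V dh) (map (map_rt g) ss))) \<in> P"
      using A dh eqs by (simp add: map_rt_foldl)
  next
    fix d assume "d \<in> set_rt (foldl Cl (V dh) (map (map_rt g) ss))"
    then show "valid P d" using dh gY Ys by (auto simp: set_rt_foldl rt.set_map)
  qed
  show ?thesis unfolding g_def[symmetric]
    using v by (simp add: map_rt_foldl rjoin_foldl)
qed

theorem mainTheorem5:
  fixes n :: nat and P :: "prod set" and \<alpha> :: "nt rt"
  assumes "ureduction_grammar n P"
    and "simple_grammar n P"
    and "verbose_grammar P"
    and "(NG n, \<alpha>) \<in> P"
  shows "chead \<alpha> = V NN \<or> nonclosure_app (chead \<alpha>)"
proof -
  have LP: "Lambda_prods \<subseteq> P" using assms(1) unfolding ureduction_grammar_def by auto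
  note D = derivs[OF LP]
  have Ln: "Lang P (NG n) = {t. normalises_in t n}" using assms(1) unfolding ureduction_grammar_def by auto
  have inL: "yield d \<in> Lang P (NG n)" if "valid P d" "dnt d = NG n" for d
    using that unfolding Lang_def by auto
  have noNT: False if hNT: "chead \<alpha> = V NT"
  proof -
    obtain ss where a: "\<alpha> = foldl Cl (V NT) ss" using chead_V[OF hNT] by blast
    define s1 where "s1 = (map (rjoin \<circ> (map_rt yield \<circ> map_rt (\<lambda>Y. SOME d. valid P d \<and> dnt d = Y))) ss)"
    note Bs1 = build[OF assms(1) assms(4)[unfolded a] D(4) yields(4), unfolded yields(1), folded s1_def]
    note s1 = conjunct1[OF Bs1] conjunct2[OF Bs1]
    note Bs2 = build[OF assms(1) assms(4)[unfolded a] D(5) yields(5), unfolded yields(2), folded s1_def]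
    note s2 = conjunct1[OF Bs2] conjunct2[OF Bs2]
    have n1: "nsteps (foldl Cl (Cl Z Sh) s1) n" using inL[OF s1(2) dnt.simps] s1(1) Ln by (simp add: normalises_nsteps)
    have n2: "nsteps (foldl Cl (Sc Z) s1) n" using inL[OF s2(2) dnt.simps] s2(1) Ln by (simp add: normalises_nsteps)
    have st: "lo_step (foldl Cl (Cl Z Sh) s1) = Some (foldl Cl (Sc Z) s1)"
      using step_head[of 0 s1] by simp
    show False
    proof (cases n)
      case 0 then show ?thesis using n1 st by (simp add: nsteps_0)
    next
      case (Suc m)
      then have nm: "nsteps (foldl Cl (Sc Z) s1) m" using n1 st nsteps_Suc by blast
      have "m = n" using nsteps_det[OF nm n2] .
      then show ?thesis using Suc by simp
    qed
  qed
  have noNS: False if hNS: "chead \<alpha> = V NS"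
  proof -
    obtain ss where a: "\<alpha> = foldl Cl (V NS) ss" using chead_V[OF hNS] by blast
    define s1 where "s1 = (map (rjoin \<circ> (map_rt yield \<circ> map_rt (\<lambda>Y. SOME d. valid P d \<and> dnt d = Y))) ss)"
    note Bs1 = build[OF assms(1) assms(4)[unfolded a] D(3) yields(6), unfolded yields(3), folded s1_def]
    note s1 = conjunct1[OF Bs1] conjunct2[OF Bs1]
    have "foldl Cl Sh s1 \<in> Lang P (NG n)" using inL[OF s1(2) dnt.simps] unfolding s1(1) .
    then have "normalises_in (foldl Cl Sh s1) n" unfolding Ln by (rule CollectD)
    then show False using is_term_Sh[of s1] unfolding normalises_in_def by blast
  qed
  have noNG: False if "chead \<alpha> = V (NG k)" for k
    using assms(3,4) that unfolding verbose_grammar_def by auto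
  show ?thesis
  proof (cases "chead \<alpha>")
    case (V x) then show ?thesis using noNT noNS noNG by (cases x) auto
  next
    case (Cl a b) then show ?thesis using chead_not_Cl by metis
  qed auto
qed

end
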